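(* Let $\mathcal{T}$ be a set of pairwise disjoint non-vertical (closed) triangles in $\mathbb{R}^3$, and let $\mathcal{E}$ be the set of edges of the triangles in $\mathcal{T}$. Let $\Delta$ be an open convex polygon in the $xy$-plane and let $C_\Delta := \Delta\times(-\infty,+\infty)$ be the corresponding column. Suppose that $C_\Delta$ contains no vertex of any triangle of $\mathcal{T}$. Let $\mathcal{T}_\Delta := \{T\cap C_\Delta : T\in\mathcal{T}\}$ and $\mathcal{E}_\Delta := \{e\cap C_\Delta : e\in\mathcal{E}\}$. If $\mathcal{E}_\Delta$ admits a depth order, then $\mathcal{T}_\Delta$ admits a depth order.
   Context: For disjoint objects $o,o'$ in $\mathbb{R}^3$, write $o\prec o'$ ($o$ is below $o'$) if there is a vertical line $\ell$ (parallel to the $z$-axis) meeting both $o$ and $o'$ such that the point(s) of $\ell\cap o$ have smaller $z$-coordinate than those of $\ell\cap o'$. Two objects whose vertical projections onto the $xy$-plane are disjoint are unrelated. A depth order of a finite set of objects $o_1,\dots,o_m$ is a total ordering $o_{\pi(1)},\dots,o_{\pi(m)}$ such that $o_{\pi(i)}\prec o_{\pi(j)}$ implies $i<j$; a set admitting a depth order is called acyclic. *)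

theory Defs
  imports "HOL-Analysis.Analysis"
begin

type_synonym point3 = "real \<times> real \<times> real"

definition xy :: "point3 \<Rightarrow> real \<times> real" where
  "xy p = (fst p, fst (snd p))"

definition zc :: "point3 \<Rightarrow> real" where
  "zc p = snd (snd p)"

definition below :: "point3 set \<Rightarrow> point3 set \<Rightarrow> bool" where
  "below o1 o2 \<longleftrightarrow> (\<exists>q. (\<exists>p\<in>o1. xy p = q) \<and> (\<exists>p\<in>o2. xy p = q) \<and>
      (\<forall>p\<in>o1. \<forall>p'\<in>o2. xy p = q \<longrightarrow> xy p' = q \<longrightarrow> zc p < zc p'))"

definition is_depth_order :: "point3 set list \<Rightarrow> point3 set set \<Rightarrow> bool" where
  "is_depth_order xs S \<longleftrightarrow> distinct xs \<and> set xs = S \<and>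
     (\<forall>i<length xs. \<forall>j<length xs. below (xs ! i) (xs ! j) \<longrightarrow> i < j)"

definition admits_depth_order :: "point3 set set \<Rightarrow> bool" where
  "admits_depth_order S \<longleftrightarrow> finite S \<and> (\<exists>xs. is_depth_order xs S)"

text \<open>Triangles are given by their vertex sets V (three points); the triangle is
  convex hull V, non-vertical means the projected vertices are not collinear.\<close>
definition nonvertical_triangle :: "point3 set \<Rightarrow> bool" where
  "nonvertical_triangle V \<longleftrightarrow> card V = 3 \<and> \<not> collinear (xy ` V)"

definition edges_of :: "point3 set set \<Rightarrow> point3 set set" where
  "edges_of Vs = {convex hull {a, b} | a b V. V \<in> Vs \<and> a \<in> V \<and> b \<in> V \<and> a \<noteq> b}"

definition column :: "(real \<times> real) set \<Rightarrow> point3 set" where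
  "column D = {p. xy p \<in> D}"

definition open_convex_polygon :: "(real \<times> real) set \<Rightarrow> bool" where
  "open_convex_polygon D \<longleftrightarrow> D \<noteq> {} \<and> (\<exists>P. finite P \<and> D = interior (convex hull P))"

end

theory Submission
  imports Defs
begin


lemma xy_comb: "xy (a *\<^sub>R p + b *\<^sub>R q) = a *\<^sub>R xy p + b *\<^sub>R xy q"
  by (simp add: xy_def)
lemma zc_comb: "zc (a *\<^sub>R p + b *\<^sub>R q) = a * zc p + b * zc q"
  by (simp add: zc_def)
lemma point_eq: "xy p = xy p' \<Longrightarrow> zc p = zc p' \<Longrightarrow> p = p'"
  by (cases p; cases p'; auto simp: xy_def zc_def)

definition lift :: "point3 set \<Rightarrow> real \<times> real \<Rightarrow> point3" where
  "lift X q = (THE p. p \<in> X \<and> xy p = q)"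

lemma lift_props:
  assumes "inj_on xy X" "q \<in> xy ` X"
  shows "lift X q \<in> X" "xy (lift X q) = q"
proof -
  obtain p where p: "p \<in> X" "xy p = q" using assms(2) by auto
  have "(THE p. p \<in> X \<and> xy p = q) = p"
    by (rule the_equality) (use p assms(1) in \<open>auto simp: inj_on_def\<close>)
  then show "lift X q \<in> X" "xy (lift X q) = q" using p by (auto simp: lift_def)
qed

lemma lift_eq: "inj_on xy X \<Longrightarrow> p \<in> X \<Longrightarrow> xy p = q \<Longrightarrow> lift X q = p"
  by (metis imageI inj_onD lift_props)

lemma lift_sub: "inj_on xy Z \<Longrightarrow> X \<subseteq> Z \<Longrightarrow> q \<in> xy ` X \<Longrightarrow> lift X q = lift Z q"
  by (metis (no_types, lifting) imageE inj_on_subset lift_eq subsetD)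

abbreviation hz :: "point3 set \<Rightarrow> real \<times> real \<Rightarrow> real" where
  "hz X q \<equiv> zc (lift X q)"

lemma below_iff:
  assumes "inj_on xy X" "inj_on xy Y"
  shows "below X Y \<longleftrightarrow> (\<exists>q \<in> xy ` X \<inter> xy ` Y. hz X q < hz Y q)"
proof
  assume "below X Y"
  then obtain q p p' where "p \<in> X" "xy p = q" "p' \<in> Y" "xy p' = q"
    "\<forall>p\<in>X. \<forall>p'\<in>Y. xy p = q \<longrightarrow> xy p' = q \<longrightarrow> zc p < zc p'"
    unfolding below_def by blast
  then show "\<exists>q \<in> xy ` X \<inter> xy ` Y. hz X q < hz Y q"
    using lift_eq assms by (metis IntI imageI)
next
  assume "\<exists>q \<in> xy ` X \<inter> xy ` Y. hz X q < hz Y q"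
  then obtain q where q: "q \<in> xy ` X" "q \<in> xy ` Y" "hz X q < hz Y q" by blast
  show "below X Y" unfolding below_def
    apply (rule exI[of _ q])
    using q lift_props[OF assms(1) q(1)] lift_props[OF assms(2) q(2)] lift_eq assms
    by metis
qed

lemma below_irrefl: "\<not> below X X"
  unfolding below_def by auto

definition seg :: "real \<times> real \<Rightarrow> real \<times> real \<Rightarrow> real \<Rightarrow> real \<times> real" where
  "seg x y s = (1 - s) *\<^sub>R x + s *\<^sub>R y"

lemma lift_affine:
  assumes "convex X" "inj_on xy X" "q1 \<in> xy ` X" "q2 \<in> xy ` X" "0 \<le> s" "s \<le> 1"
  shows "seg q1 q2 s \<in> xy ` X"
    "lift X (seg q1 q2 s) = (1 - s) *\<^sub>R lift X q1 + s *\<^sub>R lift X q2"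
proof -
  let ?p = "(1 - s) *\<^sub>R lift X q1 + s *\<^sub>R lift X q2"
  have inX: "?p \<in> X"
    using assms lift_props(1)[OF assms(2)] by (intro convexD) auto
  have xyp: "xy ?p = seg q1 q2 s"
    using lift_props(2)[OF assms(2)] assms by (simp add: xy_comb seg_def)
  show "seg q1 q2 s \<in> xy ` X" using inX xyp by force
  show "lift X (seg q1 q2 s) = ?p" using lift_eq[OF assms(2) inX xyp] .
qed

lemma convex_img:
  assumes "convex X" "inj_on xy X" "q1 \<in> xy ` X" "q2 \<in> xy ` X" "0 \<le> s" "s \<le> 1"
  shows "seg q1 q2 s \<in> xy ` X"
  using lift_affine[OF assms] by simp

lemma consistency:
  assumes cX: "convex X" "inj_on xy X" and cY: "convex Y" "inj_on xy Y"
    and b: "below X Y" and q: "q \<in> xy ` X" "q \<in> xy ` Y" and le: "hz Y q \<le> hz X q"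
  shows "X \<inter> Y \<noteq> {}"
proof -
  obtain q0 where q0: "q0 \<in> xy ` X" "q0 \<in> xy ` Y" "hz X q0 < hz Y q0"
    using b below_iff[OF cX(2) cY(2)] by blast
  define g0 where "g0 = hz Y q0 - hz X q0"
  define g1 where "g1 = hz Y q - hz X q"
  have g0: "g0 > 0" and g1: "g1 \<le> 0" using q0 le by (auto simp: g0_def g1_def)
  define s where "s = g0 / (g0 - g1)"
  have s01: "0 \<le> s" "s \<le> 1" using g0 g1 by (auto simp: s_def divide_simps)
  have hs: "(1 - s) * g0 + s * g1 = 0"
    using g0 g1 by (simp add: s_def field_simps)
  note LX = lift_affine[OF cX q0(1) q(1) s01]
  note LY = lift_affine[OF cY q0(2) q(2) s01]
  have "hz Y (seg q0 q s) = hz X (seg q0 q s)"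
    using hs unfolding LX(2) LY(2) zc_comb g0_def g1_def by (simp add: algebra_simps)
  moreover have "xy (lift Y (seg q0 q s)) = xy (lift X (seg q0 q s))"
    using lift_props(2)[OF cX(2) LX(1)] lift_props(2)[OF cY(2) LY(1)] by simp
  ultimately have "lift Y (seg q0 q s) = lift X (seg q0 q s)"
    using point_eq by blast
  then show ?thesis using lift_props(1)[OF cX(2) LX(1)] lift_props(1)[OF cY(2) LY(1)] by auto
qed

lemma nested_not_below:
  assumes "inj_on xy Z" "X \<subseteq> Z" "Y \<subseteq> Z"
  shows "\<not> below X Y"
proof
  assume "below X Y"
  moreover have "inj_on xy X" "inj_on xy Y" using assms inj_on_subset by blast+
  ultimately obtain q where "q \<in> xy ` X" "q \<in> xy ` Y" "hz X q < hz Y q"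
    using below_iff by blast
  then show False using lift_sub[OF assms(1,2)] lift_sub[OF assms(1,3)] by simp
qed




definition aff2 :: "(real \<times> real \<Rightarrow> real) \<Rightarrow> bool" where
  "aff2 f \<longleftrightarrow> (\<exists>a b c. \<forall>q. f q = a + b * fst q + c * snd q)"

lemma aff2_seg: "aff2 f \<Longrightarrow> f (seg x y s) = (1 - s) * f x + s * f y"
proof -
  assume "aff2 f"
  then obtain a b c where h: "\<And>q. f q = a + b * fst q + c * snd q" unfolding aff2_def by blast
  show ?thesis unfolding h by (simp add: seg_def algebra_simps)
qed

lemma aff2_comb3: "aff2 f \<Longrightarrow> u + v + w = 1 \<Longrightarrow>
   f (u *\<^sub>R x + v *\<^sub>R y + w *\<^sub>R z) = u * f x + v * f y + w * f z"
proof -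
  assume "aff2 f" "u + v + w = 1"
  then obtain a b c where h: "\<And>q. f q = a + b * fst q + c * snd q" unfolding aff2_def by blast
  have "a = (u + v + w) * a" using \<open>u + v + w = 1\<close> by simp
  then show ?thesis unfolding h by (simp add: algebra_simps)
qed

definition cr :: "real \<times> real \<Rightarrow> real \<times> real \<Rightarrow> real" where
  "cr u w = fst u * snd w - snd u * fst w"

definition isbary :: "point3 set \<Rightarrow> (nat \<Rightarrow> point3) \<Rightarrow> (nat \<Rightarrow> real \<times> real \<Rightarrow> real) \<Rightarrow> bool" where
  "isbary V vt lam \<longleftrightarrow> V = {vt 0, vt 1, vt 2} \<and> vt 0 \<noteq> vt 1 \<and> vt 1 \<noteq> vt 2 \<and> vt 0 \<noteq> vt 2 \<and>
     (\<forall>i. aff2 (lam i)) \<and> (\<forall>q. lam 0 q + lam 1 q + lam 2 q = 1) \<and>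
     (\<forall>q. lam 0 q *\<^sub>R xy (vt 0) + lam 1 q *\<^sub>R xy (vt 1) + lam 2 q *\<^sub>R xy (vt 2) = q) \<and>
     (\<forall>i<3. \<forall>j<3. lam i (xy (vt j)) = (if i = j then 1 else 0))"

lemma det_nonzero:
  fixes A B C :: "real \<times> real"
  assumes "\<not> collinear {A, B, C}"
  shows "cr (B - A) (C - A) \<noteq> 0"
proof
  assume d: "cr (B - A) (C - A) = 0"
  define u where "u = A - B"
  define w where "w = C - B"
  have cw: "cr u w = 0" using d unfolding u_def w_def cr_def by (simp add: algebra_simps)
  have "collinear {0, u, w}"
  proof (cases "u = 0 \<or> w = 0")
    case True then show ?thesis by (auto simp: collinear_lemma)
  next
    case False
    then have u0: "u \<noteq> 0" by auto
    show ?thesis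
    proof (cases "fst u = 0")
      case True
      then have su: "snd u \<noteq> 0" using u0 by (cases u) (auto simp: zero_prod_def)
      have fw: "fst w = 0" using cw True su by (simp add: cr_def)
      have "w = (snd w / snd u) *\<^sub>R u" using True fw su by (cases u, cases w) auto
      then show ?thesis by (metis collinear_lemma)
    next
      case False
      have "snd w = (fst w / fst u) * snd u" using cw False by (simp add: cr_def field_simps)
      then have "w = (fst w / fst u) *\<^sub>R u" using False by (cases u, cases w) auto
      then show ?thesis by (metis collinear_lemma)
    qed
  qed
  then have "collinear {A, B, C}"
    using collinear_3[of A B C] unfolding u_def w_def by (simp add: NO_MATCH_def)
  then show False using assms by simp
qed




lemma aff2_cr: "aff2 (\<lambda>q. cr (B - q) (C - q) / d)"
proof -
  obtain b1 b2 where B: "B = (b1, b2)" by (cases B)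
  obtain c1 c2 where C: "C = (c1, c2)" by (cases C)
  show ?thesis unfolding aff2_def
    apply (rule exI[of _ "(b1 * c2 - b2 * c1) / d"])
    apply (rule exI[of _ "(b2 - c2) / d"])
    apply (rule exI[of _ "(c1 - b1) / d"])
    by (auto simp: B C cr_def field_simps diff_divide_distrib add_divide_distrib)
qed

lemma bary_exists:
  assumes "nonvertical_triangle V"
  shows "\<exists>vt lam. isbary V vt lam"
proof -
  obtain x y z where V: "V = {x, y, z}" "x \<noteq> y" "y \<noteq> z" "x \<noteq> z"
    using assms unfolding nonvertical_triangle_def card_3_iff by blast
  define A where "A = xy x"
  define B where "B = xy y"
  define C where "C = xy z"
  have nc: "\<not> collinear {A, B, C}" using assms V unfolding nonvertical_triangle_def A_def B_def C_def by simp
  define d where "d = cr (B - A) (C - A)"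
  have d0: "d \<noteq> 0" using det_nonzero[OF nc] d_def by simp
  define vt where "vt = (\<lambda>i::nat. if i = 0 then x else if i = 1 then y else z)"
  define lam where "lam = (\<lambda>i::nat. if i = 0 then (\<lambda>q. cr (B - q) (C - q) / d)
      else if i = 1 then (\<lambda>q. cr (C - q) (A - q) / d) else (\<lambda>q. cr (A - q) (B - q) / d))"
  obtain a1 a2 where Aeq: "A = (a1, a2)" by (cases A)
  obtain b1 b2 where Beq: "B = (b1, b2)" by (cases B)
  obtain c1 c2 where Ceq: "C = (c1, c2)" by (cases C)
  have deq: "d = (b1 - a1) * (c2 - a2) - (b2 - a2) * (c1 - a1)" by (simp add: d_def cr_def Aeq Beq Ceq)
  have s1: "\<forall>q. lam 0 q + lam 1 q + lam 2 q = 1"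
  proof
    fix q :: "real \<times> real"
    obtain q1 q2 where q: "q = (q1, q2)" by (cases q)
    have "cr (B - q) (C - q) + cr (C - q) (A - q) + cr (A - q) (B - q) = d"
      by (simp add: q Aeq Beq Ceq cr_def deq) (simp add: algebra_simps)
    then show "lam 0 q + lam 1 q + lam 2 q = 1"
      using d0 unfolding lam_def by (simp add: add_divide_distrib[symmetric])
  qed
  have v: "xy (vt 0) = A" "xy (vt 1) = B" "xy (vt 2) = C" by (simp_all add: vt_def A_def B_def C_def)
  have vj: "\<And>j. xy (vt j) = (if j = 0 then A else if j = 1 then B else C)"
    by (simp add: vt_def A_def B_def C_def)
  have s2: "\<forall>q. lam 0 q *\<^sub>R xy (vt 0) + lam 1 q *\<^sub>R xy (vt 1) + lam 2 q *\<^sub>R xy (vt 2) = q"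
  proof
    fix q :: "real \<times> real"
    obtain q1 q2 where q: "q = (q1, q2)" by (cases q)
    have e1: "cr (B - q) (C - q) * a1 + cr (C - q) (A - q) * b1 + cr (A - q) (B - q) * c1 = d * q1"
      by (simp add: q Aeq Beq Ceq cr_def deq) (simp add: algebra_simps)
    have e2: "cr (B - q) (C - q) * a2 + cr (C - q) (A - q) * b2 + cr (A - q) (B - q) * c2 = d * q2"
      by (simp add: q Aeq Beq Ceq cr_def deq) (simp add: algebra_simps)
    have f1: "cr (B - q) (C - q) / d * a1 + cr (C - q) (A - q) / d * b1 + cr (A - q) (B - q) / d * c1 = q1"
      using e1 d0 by (simp add: field_simps)
    have f2: "cr (B - q) (C - q) / d * a2 + cr (C - q) (A - q) / d * b2 + cr (A - q) (B - q) / d * c2 = q2"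
      using e2 d0 by (simp add: field_simps)
    show "lam 0 q *\<^sub>R xy (vt 0) + lam 1 q *\<^sub>R xy (vt 1) + lam 2 q *\<^sub>R xy (vt 2) = q"
      unfolding v using f1 f2 by (simp add: lam_def Aeq Beq Ceq q)
  qed
  have s3: "\<forall>i<3. \<forall>j<3. lam i (xy (vt j)) = (if i = j then 1 else 0)"
  proof (intro allI impI)
    fix i j :: nat assume "i < 3" "j < 3"
    then have "i = 0 \<or> i = 1 \<or> i = 2" "j = 0 \<or> j = 1 \<or> j = 2" by auto
    then show "lam i (xy (vt j)) = (if i = j then 1 else 0)"
      using d0 unfolding lam_def vj
      by (auto simp: Aeq Beq Ceq cr_def deq field_simps)
  qed
  have s4: "\<forall>i. aff2 (lam i)" unfolding lam_def using aff2_cr by auto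
  have "isbary V vt lam" unfolding isbary_def using V s1 s2 s3 s4 by (simp add: vt_def)
  then show ?thesis by blast
qed




lemma xy_comb3: "xy (a *\<^sub>R p + b *\<^sub>R q + c *\<^sub>R r) = a *\<^sub>R xy p + b *\<^sub>R xy q + c *\<^sub>R xy r"
  by (simp add: xy_def)

context
  fixes V vt lam
  assumes B: "isbary V vt lam"
begin

lemma B_V: "V = {vt 0, vt 1, vt 2}" using B unfolding isbary_def by blast
lemma B_aff: "aff2 (lam i)" using B unfolding isbary_def by blast
lemma B_sum: "lam 0 q + lam 1 q + lam 2 q = 1" using B unfolding isbary_def by blast
lemma B_rec: "lam 0 q *\<^sub>R xy (vt 0) + lam 1 q *\<^sub>R xy (vt 1) + lam 2 q *\<^sub>R xy (vt 2) = q"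
  using B unfolding isbary_def by blast
lemma B_delta: "i < 3 \<Longrightarrow> j < 3 \<Longrightarrow> lam i (xy (vt j)) = (if i = j then 1 else 0)"
  using B unfolding isbary_def by blast

lemma B_lam_comb:
  assumes "u + v + w = 1" "i < 3"
  shows "lam i (xy (u *\<^sub>R vt 0 + v *\<^sub>R vt 1 + w *\<^sub>R vt 2)) =
     (if i = 0 then u else if i = 1 then v else w)"
proof -
  have "lam i (xy (u *\<^sub>R vt 0 + v *\<^sub>R vt 1 + w *\<^sub>R vt 2)) =
    u * lam i (xy (vt 0)) + v * lam i (xy (vt 1)) + w * lam i (xy (vt 2))"
    unfolding xy_comb3 using aff2_comb3[OF B_aff assms(1)] by simp
  also have "\<dots> = (if i = 0 then u else if i = 1 then v else w)"
    using assms(2) B_delta[OF assms(2)] by auto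
  finally show ?thesis .
qed

lemma B_conv: "p \<in> convex hull V \<longleftrightarrow>
   (\<exists>u v w. 0 \<le> u \<and> 0 \<le> v \<and> 0 \<le> w \<and> u + v + w = 1 \<and> p = u *\<^sub>R vt 0 + v *\<^sub>R vt 1 + w *\<^sub>R vt 2)"
  unfolding B_V convex_hull_3 by blast

lemma B_lam_nonneg: "p \<in> convex hull V \<Longrightarrow> i < 3 \<Longrightarrow> lam i (xy p) \<ge> 0"
proof -
  assume p: "p \<in> convex hull V" and i: "i < 3"
  then obtain u v w where h: "0 \<le> u" "0 \<le> v" "0 \<le> w" "u + v + w = 1"
    "p = u *\<^sub>R vt 0 + v *\<^sub>R vt 1 + w *\<^sub>R vt 2" using B_conv by blast
  have "lam i (xy p) = (if i = 0 then u else if i = 1 then v else w)"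
    using B_lam_comb[OF h(4) i] h(5) by simp
  then show ?thesis using h by simp
qed

lemma B_lift_form: "p \<in> convex hull V \<Longrightarrow>
   p = lam 0 (xy p) *\<^sub>R vt 0 + lam 1 (xy p) *\<^sub>R vt 1 + lam 2 (xy p) *\<^sub>R vt 2"
proof -
  assume "p \<in> convex hull V"
  then obtain u v w where h: "0 \<le> u" "0 \<le> v" "0 \<le> w" "u + v + w = 1"
    "p = u *\<^sub>R vt 0 + v *\<^sub>R vt 1 + w *\<^sub>R vt 2" using B_conv by blast
  have "lam 0 (xy p) = u" "lam 1 (xy p) = v" "lam 2 (xy p) = w"
    using B_lam_comb[OF h(4), of 0] B_lam_comb[OF h(4), of 1] B_lam_comb[OF h(4), of 2] h(5) by auto
  then show ?thesis using h(5) by simp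
qed

lemma B_inj: "inj_on xy (convex hull V)"
proof (rule inj_onI)
  fix p p' assume "p \<in> convex hull V" "p' \<in> convex hull V" "xy p = xy p'"
  then show "p = p'" using B_lift_form[of p] B_lift_form[of p'] by simp
qed

lemma B_proj: "q \<in> xy ` (convex hull V) \<longleftrightarrow> (\<forall>i<3. lam i q \<ge> 0)"
proof
  assume "q \<in> xy ` (convex hull V)"
  then show "\<forall>i<3. lam i q \<ge> 0" using B_lam_nonneg by auto
next
  assume h: "\<forall>i<3. lam i q \<ge> 0"
  let ?p = "lam 0 q *\<^sub>R vt 0 + lam 1 q *\<^sub>R vt 1 + lam 2 q *\<^sub>R vt 2"
  have "?p \<in> convex hull V" unfolding B_conv
    apply (rule exI[of _ "lam 0 q"], rule exI[of _ "lam 1 q"], rule exI[of _ "lam 2 q"])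
    using h B_sum[of q] by simp
  moreover have "xy ?p = q" using B_rec[of q] by (simp add: xy_comb3)
  ultimately show "q \<in> xy ` (convex hull V)" by force
qed

lemma B_vertex:
  assumes "i < 3" "m < 3" "i \<noteq> m" "lam i q = 0" "lam m q = 0"
  shows "q \<in> xy ` V"
proof -
  have r: "q = lam 0 q *\<^sub>R xy (vt 0) + lam 1 q *\<^sub>R xy (vt 1) + lam 2 q *\<^sub>R xy (vt 2)"
    using B_rec[of q] by simp
  have s: "lam 0 q + lam 1 q + lam 2 q = 1" by (rule B_sum)
  have "i = 0 \<or> i = 1 \<or> i = 2" "m = 0 \<or> m = 1 \<or> m = 2" using assms by auto
  then have "q = xy (vt 0) \<or> q = xy (vt 1) \<or> q = xy (vt 2)"
    using assms r s by auto
  then show ?thesis using B_V by auto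
qed

lemma B_edge:
  assumes "i < 3"
  shows "\<exists>a b. a \<in> V \<and> b \<in> V \<and> a \<noteq> b \<and> convex hull {a, b} \<subseteq> convex hull V \<and>
     (\<forall>p \<in> convex hull V. lam i (xy p) = 0 \<longrightarrow> p \<in> convex hull {a, b})"
proof -
  have d: "vt 0 \<noteq> vt 1" "vt 1 \<noteq> vt 2" "vt 0 \<noteq> vt 2" using B by (auto simp: isbary_def)
  have sub: "\<And>a b. a \<in> V \<Longrightarrow> b \<in> V \<Longrightarrow> convex hull {a, b} \<subseteq> convex hull V"
    by (rule hull_mono) auto
  have i3: "i = 0 \<or> i = 1 \<or> i = 2" using assms by auto
  then show ?thesis
  proof (elim disjE)
    assume i: "i = 0"
    show ?thesis
    proof (intro exI conjI ballI impI)
      show "vt 1 \<in> V" "vt 2 \<in> V" using B_V by auto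
      show "vt 1 \<noteq> vt 2" using d by auto
      show "convex hull {vt 1, vt 2} \<subseteq> convex hull V" using sub B_V by auto
      fix p assume pV: "p \<in> convex hull V" and l0: "lam i (xy p) = 0"
      have f: "p = lam 0 (xy p) *\<^sub>R vt 0 + lam 1 (xy p) *\<^sub>R vt 1 + lam 2 (xy p) *\<^sub>R vt 2"
        by (rule B_lift_form[OF pV])
      have z: "lam 0 (xy p) = 0" using l0 i by simp
      have "p = lam 1 (xy p) *\<^sub>R vt 1 + lam 2 (xy p) *\<^sub>R vt 2"
        using f z by simp
      moreover have "lam 1 (xy p) \<ge> 0" "lam 2 (xy p) \<ge> 0"
        using B_lam_nonneg[OF pV, of 1] B_lam_nonneg[OF pV, of 2] by auto
      moreover have "lam 1 (xy p) + lam 2 (xy p) = 1" using B_sum[of "xy p"] z by simp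
      ultimately show "p \<in> convex hull {vt 1, vt 2}" unfolding convex_hull_2 by blast
    qed
  next
    assume i: "i = 1"
    show ?thesis
    proof (intro exI conjI ballI impI)
      show "vt 0 \<in> V" "vt 2 \<in> V" using B_V by auto
      show "vt 0 \<noteq> vt 2" using d by auto
      show "convex hull {vt 0, vt 2} \<subseteq> convex hull V" using sub B_V by auto
      fix p assume pV: "p \<in> convex hull V" and l0: "lam i (xy p) = 0"
      have f: "p = lam 0 (xy p) *\<^sub>R vt 0 + lam 1 (xy p) *\<^sub>R vt 1 + lam 2 (xy p) *\<^sub>R vt 2"
        by (rule B_lift_form[OF pV])
      have z: "lam 1 (xy p) = 0" using l0 i by simp
      have "p = lam 0 (xy p) *\<^sub>R vt 0 + lam 2 (xy p) *\<^sub>R vt 2"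
        using f z by simp
      moreover have "lam 0 (xy p) \<ge> 0" "lam 2 (xy p) \<ge> 0"
        using B_lam_nonneg[OF pV, of 0] B_lam_nonneg[OF pV, of 2] by auto
      moreover have "lam 0 (xy p) + lam 2 (xy p) = 1" using B_sum[of "xy p"] z by simp
      ultimately show "p \<in> convex hull {vt 0, vt 2}" unfolding convex_hull_2 by blast
    qed
  next
    assume i: "i = 2"
    show ?thesis
    proof (intro exI conjI ballI impI)
      show "vt 0 \<in> V" "vt 1 \<in> V" using B_V by auto
      show "vt 0 \<noteq> vt 1" using d by auto
      show "convex hull {vt 0, vt 1} \<subseteq> convex hull V" using sub B_V by auto
      fix p assume pV: "p \<in> convex hull V" and l0: "lam i (xy p) = 0"
      have f: "p = lam 0 (xy p) *\<^sub>R vt 0 + lam 1 (xy p) *\<^sub>R vt 1 + lam 2 (xy p) *\<^sub>R vt 2"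
        by (rule B_lift_form[OF pV])
      have z: "lam 2 (xy p) = 0" using l0 i by simp
      have "p = lam 0 (xy p) *\<^sub>R vt 0 + lam 1 (xy p) *\<^sub>R vt 1"
        using f z by simp
      moreover have "lam 0 (xy p) \<ge> 0" "lam 1 (xy p) \<ge> 0"
        using B_lam_nonneg[OF pV, of 0] B_lam_nonneg[OF pV, of 1] by auto
      moreover have "lam 0 (xy p) + lam 1 (xy p) = 1" using B_sum[of "xy p"] z by simp
      ultimately show "p \<in> convex hull {vt 0, vt 1}" unfolding convex_hull_2 by blast
    qed
  qed
qed

lemma B_chord:
  assumes D: "convex D" "xy ` V \<inter> D = {}" and i: "i < 3"
    and z: "z \<in> D" "lam i z = 0" "\<forall>m<3. lam m z \<ge> 0"
    and w: "w \<in> D" "lam i w = 0"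
  shows "\<forall>m<3. lam m w \<ge> 0"
proof (rule ccontr)
  assume "\<not> (\<forall>m<3. lam m w \<ge> 0)"
  then obtain m where m: "m < 3" "lam m w < 0" by force
  have mi: "m \<noteq> i" using m w by auto
  have zm: "lam m z \<ge> 0" using z m by auto
  define s where "s = lam m z / (lam m z - lam m w)"
  have s01: "0 \<le> s" "s \<le> 1" using zm m by (auto simp: s_def divide_simps)
  have uD: "seg z w s \<in> D" using D(1) z(1) w(1) s01 unfolding seg_def
    by (simp add: convexD)
  have "lam m (seg z w s) = 0" using zm m
    by (simp add: aff2_seg[OF B_aff] s_def field_simps)
  moreover have "lam i (seg z w s) = 0" by (simp add: aff2_seg[OF B_aff] z w)
  ultimately have "seg z w s \<in> xy ` V" using B_vertex[OF i m(1) mi[symmetric]] by simp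
  then show False using uD D(2) by auto
qed

end




fun chain :: "('a \<Rightarrow> 'a \<Rightarrow> bool) \<Rightarrow> 'a \<Rightarrow> 'a list \<Rightarrow> 'a \<Rightarrow> bool" where
  "chain r x [] y = r x y"
| "chain r x (p # ps) y = (r x p \<and> chain r p ps y)"

lemma chain_append: "chain r x (us @ ob # ws) y \<longleftrightarrow> chain r x us ob \<and> chain r ob ws y"
  by (induction us arbitrary: x) auto

lemma chain_snoc: "chain r x (us @ [ob]) y \<longleftrightarrow> chain r x us ob \<and> r ob y"
  using chain_append[of r x us ob "[]" y] by simp

locale S =
  fixes Vs :: "point3 set set" and D :: "(real \<times> real) set"
  assumes fin: "finite Vs"
    and nv: "\<forall>V\<in>Vs. nonvertical_triangle V"
    and disj: "\<forall>V\<in>Vs. \<forall>V'\<in>Vs. V \<noteq> V' \<longrightarrow> convex hull V \<inter> convex hull V' = {}"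
    and poly: "open_convex_polygon D"
    and vert: "\<forall>V\<in>Vs. V \<inter> column D = {}"
begin

abbreviation "C \<equiv> column D"
definition "TP = (\<lambda>V. convex hull V \<inter> C) ` Vs"
definition "EP = (\<lambda>e. e \<inter> C) ` edges_of Vs"
definition "OB = TP \<union> EP"

lemma convD: "convex D"
  using poly unfolding open_convex_polygon_def by auto

lemma convC: "convex C"
proof (rule convexI)
  fix x y :: point3 and u v :: real
  assume h: "x \<in> C" "y \<in> C" "0 \<le> u" "0 \<le> v" "u + v = 1"
  then have "u *\<^sub>R xy x + v *\<^sub>R xy y \<in> D"
    using convexD[OF convD, of "xy x" "xy y" u v] unfolding column_def by simp
  then show "u *\<^sub>R x + v *\<^sub>R y \<in> C" unfolding column_def by (simp add: xy_comb)
qed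

lemma V_out: "V \<in> Vs \<Longrightarrow> xy ` V \<inter> D = {}"
  using vert unfolding column_def by blast

lemma inj_hull: "V \<in> Vs \<Longrightarrow> inj_on xy (convex hull V)"
proof -
  assume "V \<in> Vs"
  then obtain vt lam where "isbary V vt lam" using nv bary_exists by blast
  then show ?thesis by (rule B_inj)
qed

lemma O_struct: "X \<in> OB \<Longrightarrow> \<exists>V\<in>Vs. X \<subseteq> convex hull V \<inter> C \<and> convex X"
proof -
  assume "X \<in> OB"
  then consider (T) V where "V \<in> Vs" "X = convex hull V \<inter> C"
    | (E) e where "e \<in> edges_of Vs" "X = e \<inter> C"
    unfolding OB_def TP_def EP_def by blast
  then show ?thesis
  proof cases
    case T
    have "convex X" unfolding T(2) using convC by (intro convex_Int) auto
    then show ?thesis using T by blast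
  next
    case E
    then obtain a b V where "V \<in> Vs" "a \<in> V" "b \<in> V" "e = convex hull {a, b}"
      unfolding edges_of_def by blast
    moreover have "convex hull {a, b} \<subseteq> convex hull V" using \<open>a \<in> V\<close> \<open>b \<in> V\<close>
      by (rule_tac hull_mono) auto
    moreover have "convex X" unfolding E(2) \<open>e = convex hull {a, b}\<close>
      using convC by (intro convex_Int) auto
    ultimately show ?thesis using E by blast
  qed
qed

lemma good: "X \<in> OB \<Longrightarrow> convex X \<and> inj_on xy X \<and> X \<subseteq> C"
proof -
  assume "X \<in> OB"
  then obtain V where V: "V \<in> Vs" "X \<subseteq> convex hull V \<inter> C" "convex X" using O_struct by blast
  have "inj_on xy X" using inj_on_subset[OF inj_hull[OF V(1)]] V(2) by blast
  then show ?thesis using V by blast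
qed

lemma R_sub: "X \<in> OB \<Longrightarrow> xy ` X \<subseteq> D"
  using good[of X] unfolding column_def by blast

lemma O_meet:
  assumes "X \<in> OB" "Y \<in> OB" "X \<inter> Y \<noteq> {}"
  shows "\<exists>V\<in>Vs. X \<subseteq> convex hull V \<inter> C \<and> Y \<subseteq> convex hull V \<inter> C"
proof -
  obtain V where V: "V \<in> Vs" "X \<subseteq> convex hull V \<inter> C" using O_struct assms(1) by blast
  obtain V' where V': "V' \<in> Vs" "Y \<subseteq> convex hull V' \<inter> C" using O_struct assms(2) by blast
  have "V = V'"
  proof (rule ccontr)
    assume "V \<noteq> V'"
    then have "convex hull V \<inter> convex hull V' = {}" using disj V(1) V'(1) by blast
    then show False using V(2) V'(2) assms(3) by blast
  qed
  then show ?thesis using V V' by blast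
qed

lemma cons:
  assumes "X \<in> OB" "Y \<in> OB" "below X Y" "q \<in> xy ` X" "q \<in> xy ` Y"
  shows "hz X q < hz Y q"
proof (rule ccontr)
  assume "\<not> hz X q < hz Y q"
  then have le: "hz Y q \<le> hz X q" by simp
  have gX: "convex X" "inj_on xy X" using good[OF assms(1)] by auto
  have gY: "convex Y" "inj_on xy Y" using good[OF assms(2)] by auto
  have "X \<inter> Y \<noteq> {}" using consistency[OF gX gY assms(3-5) le] .
  then obtain V where "V \<in> Vs" "X \<subseteq> convex hull V \<inter> C" "Y \<subseteq> convex hull V \<inter> C"
    using O_meet assms by blast
  then show False using nested_not_below[of "convex hull V" X Y] inj_hull assms(3) by blast
qed

lemma below_intro:
  assumes "X \<in> OB" "Y \<in> OB" "q \<in> xy ` X" "q \<in> xy ` Y" "hz X q < hz Y q"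
  shows "below X Y"
  using below_iff good assms by blast

lemma below_witness:
  assumes "X \<in> OB" "Y \<in> OB" "below X Y"
  obtains q where "q \<in> xy ` X" "q \<in> xy ` Y"
  using below_iff good assms by blast

end




lemma chain_last_replace: "chain r x ps y \<Longrightarrow> r (last (x # ps)) y' \<Longrightarrow> chain r x ps y'"
  by (induction ps arbitrary: x) auto

lemma exit_point:
  assumes B: "isbary V vt lam" and q: "\<forall>m<3. lam m q \<ge> 0" and y: "\<not> (\<forall>m<3. lam m y \<ge> 0)"
  shows "\<exists>i<3. \<exists>s. 0 \<le> s \<and> s \<le> 1 \<and> lam i (seg q y s) = 0 \<and> (\<forall>m<3. lam m (seg q y s) \<ge> 0) \<and> lam i y < 0"
proof -
  define S where "S = {m. m < 3 \<and> lam m y < 0}"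
  define f where "f m = lam m q / (lam m q - lam m y)" for m
  have fin: "finite S" "S \<noteq> {}" using y by (auto simp: S_def not_le)
  obtain i where i: "i \<in> S" "\<not> (\<exists>m. m \<in> S \<and> f m < f i)"
    using ex_is_arg_min_if_finite[OF fin, of f] unfolding is_arg_min_def by blast
  have i3: "i < 3" "lam i y < 0" using i by (auto simp: S_def)
  have qi: "lam i q \<ge> 0" using q i3 by auto
  have s01: "0 \<le> f i" "f i \<le> 1" using qi i3 by (auto simp: f_def divide_simps)
  have zi: "lam i (seg q y (f i)) = 0" using qi i3
    by (simp add: aff2_seg[OF B_aff[OF B]] f_def field_simps)
  have allm: "\<forall>m<3. lam m (seg q y (f i)) \<ge> 0"
  proof (intro allI impI)
    fix m :: nat assume m: "m < 3"
    have e: "lam m (seg q y (f i)) = (1 - f i) * lam m q + f i * lam m y"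
      by (simp add: aff2_seg[OF B_aff[OF B]])
    show "lam m (seg q y (f i)) \<ge> 0"
    proof (cases "lam m y < 0")
      case False
      then show ?thesis using e s01 q m by simp
    next
      case True
      then have "m \<in> S" using m by (simp add: S_def)
      then have le: "f i \<le> f m" using i by force
      have qm: "lam m q \<ge> 0" using q m by auto
      have "f i * (lam m q - lam m y) \<le> lam m q"
        using le True qm by (simp add: f_def field_simps)
      then show ?thesis using e by (simp add: algebra_simps)
    qed
  qed
  show ?thesis using i3 s01 zi allm by blast
qed

context S
begin

definition cnt :: "point3 set list \<Rightarrow> nat" where
  "cnt ws = length (filter (\<lambda>x. x \<notin> EP) ws)"

lemma R_t: "xy ` (convex hull V \<inter> C) = xy ` (convex hull V) \<inter> D"
  unfolding column_def by auto

lemma one_step: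
  assumes B: "isbary V vt lam" and V: "V \<in> Vs" and i: "i < 3"
    and z: "z \<in> D" "lam i z = 0" "\<forall>m<3. lam m z \<ge> 0"
    and ob: "ob \<in> OB" "ob' \<in> OB" "below ob ob'" "xy ` ob \<inter> xy ` (convex hull V) = {}"
    and y: "y \<in> xy ` ob" "lam i y < 0"
  shows "\<exists>w \<in> xy ` ob'. lam i w < 0"
proof -
  obtain w where w: "w \<in> xy ` ob" "w \<in> xy ` ob'" using below_witness ob by blast
  show ?thesis
  proof (cases "lam i w < 0")
    case True then show ?thesis using w by blast
  next
    case False
    define s where "s = lam i y / (lam i y - lam i w)"
    have s01: "0 \<le> s" "s \<le> 1" using False y by (auto simp: s_def divide_simps)
    have u: "seg y w s \<in> xy ` ob" using convex_img good[OF ob(1)] y(1) w(1) s01 by blast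
    have uD: "seg y w s \<in> D" using u R_sub[OF ob(1)] by blast
    have l0: "lam i (seg y w s) = 0" using False y
      by (simp add: aff2_seg[OF B_aff[OF B]] s_def field_simps)
    have "\<forall>m<3. lam m (seg y w s) \<ge> 0"
      using B_chord[OF B convD V_out[OF V] i z uD l0] .
    then have "seg y w s \<in> xy ` (convex hull V)" using B_proj[OF B] by blast
    then show ?thesis using u ob(4) by blast
  qed
qed

lemma propagate:
  assumes B: "isbary V vt lam" and V: "V \<in> Vs" and i: "i < 3"
    and z: "z \<in> D" "lam i z = 0" "\<forall>m<3. lam m z \<ge> 0"
  shows "chain below ob ws a \<Longrightarrow> set (ob # ws) \<subseteq> OB \<Longrightarrow> a \<in> OB \<Longrightarrow>
     (\<forall>m \<in> set (ob # ws). xy ` m \<inter> xy ` (convex hull V) = {}) \<Longrightarrow> y \<in> xy ` ob \<Longrightarrow> lam i y < 0 \<Longrightarrow>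
     \<exists>y' \<in> xy ` a. lam i y' < 0"
proof (induction ws arbitrary: ob y)
  case Nil
  then show ?case using one_step[OF B V i z, of ob a y] by simp
next
  case (Cons ob' ws)
  then have "\<exists>w \<in> xy ` ob'. lam i w < 0"
    using one_step[OF B V i z, of ob ob' y] by simp
  then obtain w where "w \<in> xy ` ob'" "lam i w < 0" by blast
  then show ?case using Cons.IH[of ob' w] Cons.prems by simp
qed

end




context S
begin

lemma cnt_simps[simp]: "cnt [] = 0" "NO_MATCH [] xs \<Longrightarrow> cnt (x # xs) = cnt [x] + cnt xs"
  "cnt (xs @ ys) = cnt xs + cnt ys"
  by (auto simp: cnt_def)

lemma cnt_single: "x \<in> EP \<Longrightarrow> cnt [x] = 0" "x \<notin> EP \<Longrightarrow> cnt [x] = 1"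
  by (auto simp: cnt_def)

lemma EP_sub_O: "EP \<subseteq> OB" by (auto simp: OB_def)

lemma key:
  assumes IH: "\<And>ws'. cnt ws' < cnt (t # ps) \<or> (cnt ws' \<le> cnt (t # ps) \<and> length ws' < length (t # ps)) \<Longrightarrow>
      ws' \<noteq> [] \<Longrightarrow> set ws' \<subseteq> OB \<Longrightarrow> chain below (hd ws') (tl ws') (hd ws') \<Longrightarrow> False"
    and tE: "t \<notin> EP" and sO: "set (t # ps) \<subseteq> OB" and ch: "chain below t ps t"
  shows False
proof -
  have tO: "t \<in> OB" using sO by simp
  then have "t \<in> TP" using tE by (simp add: OB_def)
  then obtain V where V: "V \<in> Vs" and teq: "t = convex hull V \<inter> C" by (auto simp: TP_def)
  obtain vt lam where B: "isbary V vt lam" using bary_exists nv V by blast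
  define P where "P = xy ` (convex hull V)"
  have Rt: "xy ` t = P \<inter> D" unfolding teq P_def by (rule R_t)
  have injt: "inj_on xy t" using good[OF tO] by blast
  show False
  proof (cases ps)
    case Nil then show False using ch below_irrefl by simp
  next
    case (Cons b ps')
    have bO: "b \<in> OB" using sO Cons by simp
    have tb: "below t b" and ch2: "chain below b ps' t" using ch Cons by auto
    show False
    proof (cases "ps' = []")
      case True
      then have bt: "below b t" using ch2 by simp
      obtain q where "q \<in> xy ` t" "q \<in> xy ` b" using below_witness[OF tO bO tb] by blast
      then show False using cons[OF tO bO tb] cons[OF bO tO bt] by fastforce
    next
      case False
      then obtain ms a where ps': "ps' = ms @ [a]" by (metis append_butlast_last_id)
      have aO: "a \<in> OB" and msO: "set ms \<subseteq> OB" using sO Cons ps' by auto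
      have ch3: "chain below b ms a" and at: "below a t" using ch2 ps' chain_snoc[of below b ms a t] by auto
      have W: "t # ps = t # b # ms @ [a]" using Cons ps' by simp
      have noA: "\<not> (\<exists>q. q \<in> xy ` a \<and> q \<in> xy ` t \<and> q \<in> xy ` b)"
      proof
        assume "\<exists>q. q \<in> xy ` a \<and> q \<in> xy ` t \<and> q \<in> xy ` b"
        then obtain q where q: "q \<in> xy ` a" "q \<in> xy ` t" "q \<in> xy ` b" by blast
        have "below a b"
          using cons[OF aO tO at q(1,2)] cons[OF tO bO tb q(2,3)] below_intro[OF aO bO q(1,3)] by simp
        then have "chain below b (ms @ [a]) b" using ch3 by (simp add: chain_snoc)
        then show False
          using IH[of "b # ms @ [a]"] W tE sO Cons ps' by auto
      qed
      have middle: "\<forall>ob \<in> set ms. xy ` ob \<inter> xy ` t = {}"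
      proof (rule ballI, rule ccontr)
        fix ob assume oms: "ob \<in> set ms" and ne: "xy ` ob \<inter> xy ` t \<noteq> {}"
        then obtain us ws where ms: "ms = us @ ob # ws" by (metis split_list)
        have oO: "ob \<in> OB" using msO oms by auto
        have c1: "chain below b us ob" and c2: "chain below ob (ws @ [a]) t"
          using ch2 ps' ms chain_append[of below b us ob "ws @ [a]" t] by auto
        have usO: "set us \<subseteq> OB" "set ws \<subseteq> OB" using msO ms by auto
        obtain q where q: "q \<in> xy ` ob" "q \<in> xy ` t" using ne by blast
        consider (lt) "hz ob q < hz t q" | (gt) "hz t q < hz ob q" | (eq) "hz ob q = hz t q" by linarith
        then show False
        proof cases
          case lt
          then have "below ob t" using below_intro[OF oO tO q] by simp
          then have "chain below t (b # us @ [ob]) t" using tb c1 by (simp add: chain_snoc)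
          then show False using IH[of "t # b # us @ [ob]"] W ms tO bO usO oO by auto
        next
          case gt
          then have "below t ob" using below_intro[OF tO oO q(2,1)] by simp
          then have "chain below t (ob # ws @ [a]) t" using c2 by auto
          then show False using IH[of "t # ob # ws @ [a]"] W ms tO aO usO oO by auto
        next
          case eq
          have "lift ob q = lift t q"
            using point_eq lift_props(2)[OF _ q(1)] lift_props(2)[OF injt q(2)] eq good[OF oO] by metis
          then have "ob \<inter> t \<noteq> {}" using lift_props(1)[OF _ q(1)] lift_props(1)[OF injt q(2)] good[OF oO]
            by (metis IntI empty_iff)
          then obtain V' where V': "V' \<in> Vs" "ob \<subseteq> convex hull V' \<inter> C" "t \<subseteq> convex hull V' \<inter> C"
            using O_meet[OF oO tO] by blast
          have "t \<noteq> {}" using q by auto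
          then have "V' = V" using disj V V'(1,3) teq by blast
          then have ot: "ob \<subseteq> t" using V'(2) teq by simp
          obtain s rest where sr: "ws @ [a] = s # rest" by (cases "ws @ [a]") auto
          have sO: "s \<in> OB" using sr usO aO by (cases ws) auto
          have os: "below ob s" and c3: "chain below s rest t" using c2 sr by auto
          obtain q' where q': "q' \<in> xy ` ob" "q' \<in> xy ` s" using below_witness[OF oO sO os] by blast
          have "hz ob q' < hz s q'" using cons[OF oO sO os q'] .
          moreover have "lift ob q' = lift t q'" using lift_sub[OF injt ot q'(1)] .
          moreover have "q' \<in> xy ` t" using q'(1) ot by blast
          ultimately have "below t s" using below_intro[OF tO sO _ q'(2)] by simp
          then have "chain below t (ws @ [a]) t" using sr c3 by simp
          then show False using IH[of "t # ws @ [a]"] W ms tO aO usO by auto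
        qed
      qed
      obtain qb where qb: "qb \<in> xy ` t" "qb \<in> xy ` b" using below_witness[OF tO bO tb] by blast
      obtain o2 where o2: "below b o2" "o2 \<in> OB" "ms = [] \<longrightarrow> o2 = a" "ms \<noteq> [] \<longrightarrow> o2 = hd ms \<and> o2 \<in> set ms"
      proof (cases ms)
        case Nil show ?thesis by (rule that[of a]) (use ch3 aO Nil in simp_all)
      next
        case (Cons o2 ms'') show ?thesis by (rule that[of o2]) (use ch3 msO Cons in simp_all)
      qed
      obtain y1 where y1: "y1 \<in> xy ` b" "y1 \<in> xy ` o2" using below_witness[OF bO o2(2,1)] by blast
      have y1D: "y1 \<in> D" using y1 R_sub[OF bO] by blast
      have y1P: "y1 \<notin> P"
      proof
        assume "y1 \<in> P"
        then have yt: "y1 \<in> xy ` t" using Rt y1D by simp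
        show False
        proof (cases "ms = []")
          case True
          then have "o2 = a" using o2 by simp
          then show False using noA yt y1 by blast
        next
          case False then show False using middle o2 yt y1 by blast
        qed
      qed
      have qbP: "\<forall>m<3. lam m qb \<ge> 0" using qb Rt B_proj[OF B] P_def by auto
      have y1n: "\<not> (\<forall>m<3. lam m y1 \<ge> 0)" using y1P B_proj[OF B] P_def by auto
      obtain i s where i: "i < 3" "0 \<le> s" "s \<le> 1" "lam i (seg qb y1 s) = 0"
        "\<forall>m<3. lam m (seg qb y1 s) \<ge> 0" "lam i y1 < 0"
        using exit_point[OF B qbP y1n] by blast
      define z where "z = seg qb y1 s"
      have zb: "z \<in> xy ` b" unfolding z_def using convex_img good[OF bO] qb(2) y1(1) i(2,3) by blast
      have zD: "z \<in> D" using zb R_sub[OF bO] by blast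
      have zl: "lam i z = 0" "\<forall>m<3. lam m z \<ge> 0" using i by (auto simp: z_def)
      obtain y' where y': "y' \<in> xy ` a" "lam i y' < 0"
      proof (cases ms)
        case Nil then show ?thesis using that y1 o2 i by auto
      next
        case (Cons o2' ms'')
        have "o2' = o2" using o2 Cons ch3 by simp
        have c: "chain below o2 ms'' a" using ch3 Cons \<open>o2' = o2\<close> by simp
        have mid: "\<forall>m \<in> set (o2 # ms''). xy ` m \<inter> xy ` (convex hull V) = {}"
        proof
          fix m assume "m \<in> set (o2 # ms'')"
          then have "m \<in> set ms" using Cons \<open>o2' = o2\<close> by simp
          then have mO: "m \<in> OB" using msO by blast
          have "xy ` m \<inter> xy ` t = {}" using middle \<open>m \<in> set ms\<close> by blast
          moreover have "xy ` m \<subseteq> D" using R_sub[OF mO] .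
          ultimately show "xy ` m \<inter> xy ` (convex hull V) = {}" using Rt P_def by blast
        qed
        have "set (o2 # ms'') \<subseteq> OB" using msO Cons \<open>o2' = o2\<close> by simp
        then show ?thesis using propagate[OF B V i(1) zD zl c _ aO mid y1(2) i(6)] that by blast
      qed
      obtain qa where qa: "qa \<in> xy ` a" "qa \<in> xy ` t" using below_witness[OF aO tO at] by blast
      have qai: "lam i qa \<ge> 0" using qa Rt B_proj[OF B] P_def i(1) by auto
      define s' where "s' = lam i y' / (lam i y' - lam i qa)"
      have s'01: "0 \<le> s'" "s' \<le> 1" using qai y' by (auto simp: s'_def divide_simps)
      define w where "w = seg y' qa s'"
      have wa: "w \<in> xy ` a" unfolding w_def using convex_img good[OF aO] qa(1) y'(1) s'01 by blast
      have wD: "w \<in> D" using wa R_sub[OF aO] by blast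
      have wl: "lam i w = 0" using qai y'
        by (simp add: w_def aff2_seg[OF B_aff[OF B]] s'_def field_simps)
      have wl2: "\<forall>m<3. lam m w \<ge> 0" using B_chord[OF B convD V_out[OF V] i(1) zD zl wD wl] .
      obtain a' b' where e: "a' \<in> V" "b' \<in> V" "a' \<noteq> b'" "convex hull {a', b'} \<subseteq> convex hull V"
        "\<forall>p \<in> convex hull V. lam i (xy p) = 0 \<longrightarrow> p \<in> convex hull {a', b'}"
        using B_edge[OF B i(1)] by blast
      define E where "E = convex hull {a', b'} \<inter> C"
      have EEP: "E \<in> EP" unfolding E_def EP_def edges_of_def using e V by blast
      have EO: "E \<in> OB" using EEP EP_sub_O by blast
      have Et: "E \<subseteq> t" using e(4) teq E_def by blast
      have inE: "\<And>u. u \<in> D \<Longrightarrow> lam i u = 0 \<Longrightarrow> \<forall>m<3. lam m u \<ge> 0 \<Longrightarrow> u \<in> xy ` E"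
      proof -
        fix u assume u: "u \<in> D" "lam i u = 0" "\<forall>m<3. lam m u \<ge> 0"
        then have "u \<in> xy ` (convex hull V)" using B_proj[OF B] by blast
        then obtain p where p: "p \<in> convex hull V" "xy p = u" by blast
        then have "p \<in> convex hull {a', b'}" using e(5) u by auto
        moreover have "p \<in> C" using p u unfolding column_def by simp
        ultimately show "u \<in> xy ` E" using p unfolding E_def by blast
      qed
      have zE: "z \<in> xy ` E" using inE zD zl by blast
      have wE: "w \<in> xy ` E" using inE wD wl wl2 by blast
      have "below a E"
      proof -
        have wt: "w \<in> xy ` t" using wE Et by blast
        have "hz a w < hz t w" using cons[OF aO tO at wa wt] .
        moreover have "lift E w = lift t w" using lift_sub[OF injt Et wE] .
        ultimately show ?thesis using below_intro[OF aO EO wa wE] by simp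
      qed
      moreover have "below E b"
      proof -
        have zt: "z \<in> xy ` t" using zE Et by blast
        have "hz t z < hz b z" using cons[OF tO bO tb zt zb] .
        moreover have "lift E z = lift t z" using lift_sub[OF injt Et zE] .
        ultimately show ?thesis using below_intro[OF EO bO zE zb] by simp
      qed
      ultimately have "chain below E (b # ms @ [a]) E" using ch3 by (simp add: chain_snoc)
      then show False using IH[of "E # b # ms @ [a]"] W tE EEP EO sO Cons ps' by (auto simp: cnt_single)
    qed
  qed
qed

end




lemma topo:
  fixes S :: "point3 set set"
  shows "finite S \<Longrightarrow> (\<forall>ws. ws \<noteq> [] \<longrightarrow> set ws \<subseteq> S \<longrightarrow> chain below (hd ws) (tl ws) (hd ws) \<longrightarrow> False)
    \<Longrightarrow> \<exists>xs. is_depth_order xs S"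
proof (induction "card S" arbitrary: S rule: less_induct)
  case less
  show ?case
  proof (cases "S = {}")
    case True then show ?thesis by (auto simp: is_depth_order_def)
  next
    case False
    define R where "R = {(y, x). y \<in> S \<and> x \<in> S \<and> below y x}"
    have "R \<subseteq> S \<times> S" by (auto simp: R_def)
    then have finR: "finite R" using finite_subset finite_cartesian_product[OF less(2) less(2)] by blast
    have tc: "(x, y) \<in> R\<^sup>+ \<Longrightarrow> x \<in> S \<and> (\<exists>ps. chain below x ps y \<and> set ps \<subseteq> S)" for x y
    proof (induction rule: trancl_induct)
      case (base y)
      then have "x \<in> S" "below x y" by (auto simp: R_def)
      then have "x \<in> S \<and> chain below x [] y \<and> set [] \<subseteq> S" by simp
      then show ?case by blast
    next
      case (step y z)
      then obtain ps where "chain below x ps y" "set ps \<subseteq> S" by blast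
      moreover have "below y z" "y \<in> S" using step by (auto simp: R_def)
      ultimately have "chain below x (ps @ [y]) z \<and> set (ps @ [y]) \<subseteq> S" by (simp add: chain_snoc)
      moreover have "x \<in> S" using step.IH by blast
      ultimately show ?case by blast
    qed
    have "acyclic R"
    proof (rule acyclicI, rule allI, rule notI)
      fix x assume "(x, x) \<in> R\<^sup>+"
      then obtain ps where "x \<in> S" "chain below x ps x" "set ps \<subseteq> S" using tc by blast
      then show False using less(3)[rule_format, of "x # ps"] by simp
    qed
    then have wfR: "wf R" using wf_iff_acyclic_if_finite[OF finR] by simp
    obtain x0 where "x0 \<in> S" using False by blast
    obtain m where m: "m \<in> S" "\<And>y. (y, m) \<in> R \<Longrightarrow> y \<notin> S"
      by (rule wfE_min[OF wfR \<open>x0 \<in> S\<close>]) (rule that; blast)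
    have mmin: "\<forall>y\<in>S. \<not> below y m"
    proof (intro ballI notI)
      fix y assume "y \<in> S" "below y m"
      then have "(y, m) \<in> R" using m(1) by (simp add: R_def)
      then show False using m(2) \<open>y \<in> S\<close> by blast
    qed
    have "card (S - {m}) < card S" using m(1) less(2) by (meson card_Diff1_less)
    moreover have "finite (S - {m})" using less(2) by simp
    moreover have "\<forall>ws. ws \<noteq> [] \<longrightarrow> set ws \<subseteq> S - {m} \<longrightarrow> chain below (hd ws) (tl ws) (hd ws) \<longrightarrow> False"
    proof (intro allI impI)
      fix ws assume "ws \<noteq> []" "set ws \<subseteq> S - {m}" "chain below (hd ws) (tl ws) (hd ws)"
      then show False using less(3)[rule_format, of ws] by blast
    qed
    ultimately obtain xs where xs: "is_depth_order xs (S - {m})" using less(1) by blast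
    have xd: "distinct xs" "set xs = S - {m}"
      and ord: "\<forall>i<length xs. \<forall>j<length xs. below (xs ! i) (xs ! j) \<longrightarrow> i < j"
      using xs unfolding is_depth_order_def by blast+
    have "is_depth_order (m # xs) S"
      unfolding is_depth_order_def
    proof (intro conjI allI impI)
      show "distinct (m # xs)" using xd by simp
      show "set (m # xs) = S" using xd m(1) by auto
      fix i j assume ij: "i < length (m # xs)" "j < length (m # xs)" "below ((m # xs) ! i) ((m # xs) ! j)"
      show "i < j"
      proof (cases i)
        case 0
        show ?thesis
        proof (cases j)
          case 0 then show ?thesis using ij \<open>i = 0\<close> below_irrefl by simp
        next
          case (Suc j') then show ?thesis using \<open>i = 0\<close> by simp
        qed
      next
        case (Suc i')
        show ?thesis
        proof (cases j)
          case 0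
          have i': "i' < length xs" using ij(1) Suc by simp
          have "xs ! i' \<in> S" using nth_mem[OF i'] xd(2) by blast
          moreover have "below (xs ! i') m" using ij(3) Suc 0 by simp
          ultimately show ?thesis using mmin by blast
        next
          case (Suc j')
          have "i' < length xs" "j' < length xs" using ij(1,2) \<open>i = Suc i'\<close> Suc by simp_all
          moreover have "below (xs ! i') (xs ! j')" using ij(3) \<open>i = Suc i'\<close> Suc by simp
          ultimately have "i' < j'" using ord by blast
          then show ?thesis using \<open>i = Suc i'\<close> Suc by simp
        qed
      qed
    qed
    then show ?thesis by blast
  qed
qed

context S
begin

lemma no_walk:
  assumes noE: "\<And>x ps. set (x # ps) \<subseteq> EP \<Longrightarrow> chain below x ps x \<Longrightarrow> False"
  shows "ws \<noteq> [] \<Longrightarrow> set ws \<subseteq> OB \<Longrightarrow> chain below (hd ws) (tl ws) (hd ws) \<Longrightarrow> False"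
proof (induction ws rule: wf_induct[OF wf_measures[of "[cnt, length]"]])
  case (1 ws)
  obtain x ps where ws: "ws = x # ps" using 1(2) by (cases ws) auto
  have IH: "\<And>ws'. cnt ws' < cnt ws \<or> (cnt ws' \<le> cnt ws \<and> length ws' < length ws) \<Longrightarrow>
      ws' \<noteq> [] \<Longrightarrow> set ws' \<subseteq> OB \<Longrightarrow> chain below (hd ws') (tl ws') (hd ws') \<Longrightarrow> False"
  proof -
    fix ws' assume "cnt ws' < cnt ws \<or> (cnt ws' \<le> cnt ws \<and> length ws' < length ws)"
      "ws' \<noteq> []" "set ws' \<subseteq> OB" "chain below (hd ws') (tl ws') (hd ws')"
    then show False using 1(1)[rule_format, of ws'] by (auto simp: le_less)
  qed
  show False
  proof (cases "set ws \<subseteq> EP")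
    case True then show False using noE 1 ws by auto
  next
    case False
    then obtain t where t: "t \<in> set ws" "t \<notin> EP" by blast
    show False
    proof (cases "t = x")
      case True
      then show False using key[of t ps] IH t 1 ws by auto
    next
      case False
      then have "t \<in> set ps" using t ws by simp
      then obtain us vs where ps: "ps = us @ t # vs" by (metis split_list)
      have ch: "chain below t (vs @ x # us) t"
        using 1(4) ws ps chain_append[of below x us t vs x] chain_append[of below t vs x us t] by auto
      have same: "cnt (t # vs @ x # us) = cnt ws" "length (t # vs @ x # us) = length ws"
        using ws ps by auto
      have sO: "set (t # vs @ x # us) \<subseteq> OB" using 1(3) ws ps by auto
      show False using key[of t "vs @ x # us"] IH same t(2) sO ch by auto
    qed
  qed
qed

end

theorem proposition1:
  fixes Vs :: "point3 set set" and D :: "(real \<times> real) set"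
  assumes "finite Vs"
    and "\<forall>V\<in>Vs. nonvertical_triangle V"
    and "\<forall>V\<in>Vs. \<forall>V'\<in>Vs. V \<noteq> V' \<longrightarrow> convex hull V \<inter> convex hull V' = {}"
    and "open_convex_polygon D"
    and "\<forall>V\<in>Vs. V \<inter> column D = {}"
    and "admits_depth_order ((\<lambda>e. e \<inter> column D) ` edges_of Vs)"
  shows "admits_depth_order ((\<lambda>V. convex hull V \<inter> column D) ` Vs)"
proof -
  interpret S Vs D using assms(1-5) by unfold_locales
  obtain ys where ys: "is_depth_order ys EP" using assms(6) unfolding admits_depth_order_def EP_def by blast
  define idx where "idx X = (THE i. i < length ys \<and> ys ! i = X)" for X
  have idx: "X \<in> EP \<Longrightarrow> idx X < length ys \<and> ys ! idx X = X" for X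
  proof -
    assume "X \<in> EP"
    then have "\<exists>!i. i < length ys \<and> ys ! i = X" using ys distinct_Ex1[of ys X] by (simp add: is_depth_order_def)
    then show ?thesis unfolding idx_def by (rule theI')
  qed
  have bel: "X \<in> EP \<Longrightarrow> Y \<in> EP \<Longrightarrow> below X Y \<Longrightarrow> idx X < idx Y" for X Y
  proof -
    assume h: "X \<in> EP" "Y \<in> EP" "below X Y"
    have o: "\<forall>i<length ys. \<forall>j<length ys. below (ys ! i) (ys ! j) \<longrightarrow> i < j"
      using ys unfolding is_depth_order_def by blast
    show ?thesis using o[rule_format, of "idx X" "idx Y"] idx[OF h(1)] idx[OF h(2)] h(3) by simp
  qed
  have chidx: "set (x # ps) \<subseteq> EP \<Longrightarrow> y \<in> EP \<Longrightarrow> chain below x ps y \<Longrightarrow> idx x < idx y" for x ps y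
  proof (induction ps arbitrary: x)
    case Nil then show ?case using bel by simp
  next
    case (Cons p ps)
    then have "idx x < idx p" "idx p < idx y" using bel by auto
    then show ?case by simp
  qed
  have noE: "\<And>x ps. set (x # ps) \<subseteq> EP \<Longrightarrow> chain below x ps x \<Longrightarrow> False"
  proof -
    fix x ps assume "set (x # ps) \<subseteq> EP" "chain below x ps x"
    then show False using chidx[of x ps x] by simp
  qed
  have "\<forall>ws. ws \<noteq> [] \<longrightarrow> set ws \<subseteq> TP \<longrightarrow> chain below (hd ws) (tl ws) (hd ws) \<longrightarrow> False"
  proof (intro allI impI)
    fix ws assume a: "ws \<noteq> []" "set ws \<subseteq> TP" "chain below (hd ws) (tl ws) (hd ws)"
    have "set ws \<subseteq> OB" using a(2) by (auto simp: OB_def)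
    show False by (rule no_walk[OF noE a(1) \<open>set ws \<subseteq> OB\<close> a(3)])
  qed
  moreover have "finite TP" using assms(1) by (simp add: TP_def)
  ultimately have "\<exists>xs. is_depth_order xs TP" using topo by blast
  then show ?thesis using \<open>finite TP\<close> unfolding admits_depth_order_def TP_def by blast
qed


end
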